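(* Let $r\geq2$ and $\beta\in\{1,2\}$ be integers, let $x\in[0,1]^N$, suppose $D_1^\beta x$ satisfies the $\Lambda_M$-minimum separation condition for a positive integer $M$, and let $q\in\mathbb{R}^N$ be such that $\|D^{-r}(x-q)\|_\infty\leq\delta/2$ and $\|(D^{-r}(x-q))_{N-r+1:N}\|_\infty\leq(2N)^{-r}\delta$ (as holds for the $r$-th order $\Sigma\Delta$ quantization of $x$ with step $\delta$ in the interior and step $2\delta/(2N)^r$ for the last $r$ entries). Then for every $\widetilde x\in\mathbb{R}^N$ satisfying $$\|D^{-r}(\widetilde x-q)\|_\infty\leq\delta/2\quad\text{and}\quad\|(D^{-r}(\widetilde x-q))_{N-r+1:N}\|_\infty\leq\Big(\frac1{2N}\Big)^r\delta,$$ we have $\|P_MD_1^\beta(\widetilde x-x)\|_2\leq C\left(\frac MN\right)^{r+\beta}\sqrt N\,\delta$, where $C$ is a constant independent of $\widetilde x$, $x$, $N$, $M$ and $\delta$.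
   Context: $D$ is the $N\times N$ matrix with $1$ on the diagonal, $-1$ on the subdiagonal, $0$ elsewhere; $D_1$ is $D$ with an additional $-1$ in the upper right corner (circulant difference matrix). For a vector $v$, $v_{N-r+1:N}$ denotes its last $r$ entries. $F=\{\omega^{kj}\}_{k,j=0}^{N-1}$, $\omega=e^{-2\pi i/N}$, is the unnormalized DFT matrix; $F_M$ consists of its rows with frequencies $k\in\{-M,\dots,M\}$ (indices mod $N$), and $P_M=\frac1NF_M^*F_M$. The $\Lambda_M$-minimum separation condition for $v\in\mathbb{R}^N$ with support $S\subseteq\{0,\dots,N-1\}$: $\min_{s\neq s'\in S}\frac1Nd(s,s')\geq\frac2M$, with $d(s,s')=\min\{|s-s'|,|s+N-s'|,|s-N-s'|\}$. *)

theory Defs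
  imports Complex_Main
begin

text \<open>Vectors in R^N (resp. C^N) are represented as functions on nat; only the
entries with index i < N matter (indices 0..N-1, as in the paper).\<close>

definition Dmat :: "nat \<Rightarrow> (nat \<Rightarrow> real) \<Rightarrow> nat \<Rightarrow> real" where
  "Dmat N v = (\<lambda>i. v i - (if i = 0 then 0 else v (i - 1)))"

definition Dinv :: "nat \<Rightarrow> (nat \<Rightarrow> real) \<Rightarrow> nat \<Rightarrow> real" where
  "Dinv N v = (\<lambda>i. \<Sum>j\<le>i. v j)"

text \<open>D_1: circulant difference matrix (D with an extra -1 in the upper right corner).\<close>
definition D1mat :: "nat \<Rightarrow> (nat \<Rightarrow> real) \<Rightarrow> nat \<Rightarrow> real" where
  "D1mat N v = (\<lambda>i. v i - v ((i + N - 1) mod N))"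

text \<open>Entry of the unnormalised DFT matrix: omega^(k j), omega = exp(-2 pi i / N);
  the frequency k is an integer (taken mod N, which is automatic by periodicity).\<close>
definition dft_entry :: "nat \<Rightarrow> int \<Rightarrow> nat \<Rightarrow> complex" where
  "dft_entry N k j = cis (- 2 * pi * real_of_int k * real j / real N)"

text \<open>F_M v: the rows of F with frequencies k in {-M..M}.\<close>
definition F_M :: "nat \<Rightarrow> nat \<Rightarrow> (nat \<Rightarrow> real) \<Rightarrow> int \<Rightarrow> complex" where
  "F_M N M v = (\<lambda>k. \<Sum>j<N. dft_entry N k j * complex_of_real (v j))"

definition P_M :: "nat \<Rightarrow> nat \<Rightarrow> (nat \<Rightarrow> real) \<Rightarrow> nat \<Rightarrow> complex" where
  "P_M N M v = (\<lambda>l. (1 / of_nat N) *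
      (\<Sum>k\<in>{- int M..int M}. cnj (dft_entry N k l) * F_M N M v k))"

definition l2norm :: "nat \<Rightarrow> (nat \<Rightarrow> complex) \<Rightarrow> real" where
  "l2norm N w = sqrt (\<Sum>i<N. (cmod (w i))\<^sup>2)"

definition circ_dist :: "nat \<Rightarrow> nat \<Rightarrow> nat \<Rightarrow> int" where
  "circ_dist N s s' = min \<bar>int s - int s'\<bar>
      (min \<bar>int s + int N - int s'\<bar> \<bar>int s - int N - int s'\<bar>)"

definition supp_vec :: "nat \<Rightarrow> (nat \<Rightarrow> real) \<Rightarrow> nat set" where
  "supp_vec N v = {i. i < N \<and> v i \<noteq> 0}"

definition min_sep :: "nat \<Rightarrow> nat \<Rightarrow> (nat \<Rightarrow> real) \<Rightarrow> bool" where
  "min_sep N M v = (\<forall>s\<in>supp_vec N v. \<forall>s'\<in>supp_vec N v. s \<noteq> s' \<longrightarrow>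
      real_of_int (circ_dist N s s') / real N \<ge> 2 / real M)"

end

theory Submission
  imports Defs "HOL-Analysis.Analysis"
begin

definition zz :: "nat \<Rightarrow> int \<Rightarrow> complex" where
  "zz N k = cis (- 2 * pi * real_of_int k / real N)"

lemma dft_Suc: "dft_entry N k (Suc j) = dft_entry N k j * zz N k"
  unfolding dft_entry_def zz_def by (simp add: cis_mult algebra_simps diff_divide_distrib)

lemma dft_0[simp]: "dft_entry N k 0 = 1"
  unfolding dft_entry_def by simp

lemma dft_N: assumes "N > 0" shows "dft_entry N k N = 1"
proof -
  have "- 2 * pi * real_of_int k * real N / real N = 2 * pi * real_of_int (- k)"
    using assms by simp
  then show ?thesis unfolding dft_entry_def
    by (simp only:) (rule cis_multiple_2pi, simp)
qed

lemma norm_1_cis: "cmod (1 - cis t) \<le> \<bar>t\<bar>"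
proof -
  have "(cmod (1 - cis t))\<^sup>2 = (1 - cos t)\<^sup>2 + (sin t)\<^sup>2"
    by (simp add: cmod_power2)
  also have "\<dots> = 2 - 2 * cos t" by (simp add: power2_eq_square algebra_simps sin_squared_eq)
  also have "\<dots> = 4 * (sin (t/2))\<^sup>2" using cos_double_sin[of "t/2"] by simp
  also have "\<dots> \<le> 4 * (t/2)\<^sup>2"
    using abs_sin_x_le_abs_x[of "t/2"] by (simp add: abs_le_square_iff[symmetric])
  also have "\<dots> = t\<^sup>2" by (simp add: power2_eq_square)
  finally show ?thesis by (simp add: abs_le_square_iff[symmetric])
qed

lemma norm_1_cis2: "cmod (1 - cis t) \<le> 2"
  using norm_triangle_ineq4[of 1 "cis t"] by simp

lemma norm_1_zz: assumes "N > 0" "\<bar>k\<bar> \<le> int M"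
  shows "cmod (1 - zz N k) \<le> 2 * pi * real M / real N"
proof -
  have "cmod (1 - zz N k) \<le> \<bar>- 2 * pi * real_of_int k / real N\<bar>" unfolding zz_def by (rule norm_1_cis)
  also have "\<dots> = 2 * pi * \<bar>real_of_int k\<bar> / real N" using assms by (simp add: abs_mult)
  also have "\<dots> \<le> 2 * pi * real M / real N"
    using assms by (intro divide_right_mono mult_left_mono) auto
  finally show ?thesis .
qed

lemma norm_1_zz2: "cmod (1 - zz N k) \<le> 2"
  unfolding zz_def by (rule norm_1_cis2)

lemma F_Dmat: assumes "N > 0"
  shows "F_M N M (Dmat N v) k = (1 - zz N k) * F_M N M v k + v (N - 1)"
proof -
  obtain n where N: "N = Suc n" using assms by (cases N) auto
  have s2: "(\<Sum>j<N. dft_entry N k j * complex_of_real (if j = 0 then 0 else v (j - 1)))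
      = zz N k * (\<Sum>j<n. dft_entry N k j * complex_of_real (v j))"
    unfolding N sum.lessThan_Suc_shift by (simp add: dft_Suc sum_distrib_left algebra_simps)
  have s3: "(\<Sum>j<N. dft_entry N k j * complex_of_real (v j)) =
      (\<Sum>j<n. dft_entry N k j * complex_of_real (v j)) + dft_entry N k n * v n"
    unfolding N by simp
  have e: "zz N k * dft_entry N k n = 1" using dft_N[OF assms, of k] dft_Suc[of N k n] N by (simp add: mult.commute)
  have "F_M N M (Dmat N v) k = (\<Sum>j<N. dft_entry N k j * complex_of_real (v j))
     - (\<Sum>j<N. dft_entry N k j * complex_of_real (if j = 0 then 0 else v (j - 1)))"
    unfolding F_M_def Dmat_def by (simp add: sum_subtractf algebra_simps)
  also have "\<dots> = (1 - zz N k) * F_M N M v k + v (N - 1)"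
    unfolding s2 F_M_def s3 using e N by (simp add: algebra_simps)
  finally show ?thesis .
qed

lemma F_D1mat: assumes "N > 0"
  shows "F_M N M (D1mat N v) k = (1 - zz N k) * F_M N M v k"
proof -
  have d: "D1mat N v j = Dmat N v j - (if j = 0 then v (N - 1) else 0)" if "j < N" for j
  proof (cases j)
    case 0 then show ?thesis using assms by (simp add: D1mat_def Dmat_def)
  next
    case (Suc i)
    then have "(j + N - 1) mod N = i" using that by simp
    then show ?thesis using Suc by (simp add: D1mat_def Dmat_def)
  qed
  have "F_M N M (D1mat N v) k = (\<Sum>j<N. dft_entry N k j * complex_of_real (Dmat N v j))
     - (\<Sum>j<N. dft_entry N k j * complex_of_real (if j = 0 then v (N - 1) else 0))"
    unfolding F_M_def sum_subtractf[symmetric] by (intro sum.cong) (auto simp: d algebra_simps)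
  also have "(\<Sum>j<N. dft_entry N k j * complex_of_real (if j = 0 then v (N - 1) else 0)) = v (N - 1)"
  proof -
    have "(\<Sum>j<N. dft_entry N k j * complex_of_real (if j = 0 then v (N - 1) else 0))
       = (\<Sum>j<N. if j = 0 then complex_of_real (v (N - 1)) else 0)"
      by (intro sum.cong) auto
    also have "\<dots> = v (N - 1)" using assms by (simp add: sum.delta)
    finally show ?thesis .
  qed
  finally show ?thesis using F_Dmat[OF assms] unfolding F_M_def by simp
qed

lemma geo: assumes "N > 0"
  shows "(\<Sum>l<N. cnj (dft_entry N k l) * dft_entry N k' l) = (if int N dvd (k - k') then of_nat N else 0)"
proof -
  define w where "w = cis (2 * pi * real_of_int (k - k') / real N)"
  have t: "cnj (dft_entry N k l) * dft_entry N k' l = w ^ l" for l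
  proof -
    have "cnj (dft_entry N k l) * dft_entry N k' l = cis (- (- 2 * pi * real_of_int k * real l / real N) + (- 2 * pi * real_of_int k' * real l / real N))"
      unfolding dft_entry_def by (simp only: cis_cnj cis_mult)
    also have "- (- 2 * pi * real_of_int k * real l / real N) + (- 2 * pi * real_of_int k' * real l / real N) = real l * (2 * pi * real_of_int (k - k') / real N)"
      by (cases "N = 0") (simp_all add: field_simps)
    finally show ?thesis unfolding w_def Complex.DeMoivre .
  qed
  show ?thesis
  proof (cases "int N dvd (k - k')")
    case True
    then obtain m where m: "k - k' = int N * m" by (auto elim: dvdE)
    have "2 * pi * real_of_int (k - k') / real N = 2 * pi * real_of_int m" unfolding m using assms by simp
    then have "w = 1" unfolding w_def by (simp only:) (rule cis_multiple_2pi, simp)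
    then show ?thesis using True t by simp
  next
    case False
    have "w \<noteq> 1"
    proof
      assume "w = 1"
      then have "cos (2 * pi * real_of_int (k - k') / real N) = 1" unfolding w_def
        by (metis Re_complex_of_real cis.sel(1) one_complex.sel(1))
      then obtain n :: int where n: "2 * pi * real_of_int (k - k') / real N = real_of_int n * 2 * pi"
        using cos_one_2pi_int by blast
      then have "2 * pi * real_of_int (k - k') = 2 * pi * (real_of_int n * real N)" using assms
        by (simp add: field_simps)
      then have "real_of_int (k - k') = real_of_int (n * int N)" by simp
      then have "k - k' = int N * n" by (simp only: of_int_eq_iff mult.commute)
      then show False using False by simp
    qed
    have wN: "w ^ N = 1"
    proof -
      have "w ^ N = cis (2 * pi * real_of_int (k - k'))" unfolding w_def Complex.DeMoivre using assms by simp
      then show ?thesis by simp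
    qed
    have "(\<Sum>l<N. w ^ l) = 0" using \<open>w \<noteq> 1\<close> wN by (simp add: sum_gp_strict)
    then show ?thesis using False t by simp
  qed
qed

lemma count_res:
  assumes "N > 0"
  shows "real (card {k'\<in>{- int M..int M}. int N dvd (k - k')}) \<le> 2 * real M / real N + 1"
proof -
  let ?S = "{k'\<in>{- int M..int M}. int N dvd (k - k')}"
  let ?f = "\<lambda>k'. (k' + int M) div int N"
  have inj: "inj_on ?f ?S"
  proof
    fix a b assume a: "a \<in> ?S" and b: "b \<in> ?S" and e: "?f a = ?f b"
    have "int N dvd (k - b) - (k - a)" using a b dvd_diff[of "int N" "k - b" "k - a"] by blast
    then have "int N dvd (a + int M) - (b + int M)" by simp
    then have "(a + int M) mod int N = (b + int M) mod int N"
      by (simp only: mod_eq_dvd_iff)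
    then show "a = b" using e div_mult_mod_eq[of "a + int M" "int N"] div_mult_mod_eq[of "b + int M" "int N"] by (metis add_right_cancel)
  qed
  have sub: "?f ` ?S \<subseteq> {0..(2 * int M) div int N}"
  proof
    fix y assume "y \<in> ?f ` ?S"
    then obtain a where a: "a \<in> ?S" "y = ?f a" by blast
    have "0 \<le> a + int M" "a + int M \<le> 2 * int M" using a by auto
    then show "y \<in> {0..(2 * int M) div int N}" using a(2) assms
      by (simp add: zdiv_mono1 pos_imp_zdiv_nonneg_iff)
  qed
  have "card ?S = card (?f ` ?S)" using card_image[OF inj] by simp
  also have "\<dots> \<le> card {0..(2 * int M) div int N}" by (rule card_mono) (use sub in auto)
  finally have c: "card ?S \<le> nat ((2 * int M) div int N + 1)" by simp
  have "real_of_int ((2 * int M) div int N) \<le> real_of_int (2 * int M) / real_of_int (int N)"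
    by (rule real_of_int_div4)
  moreover have "0 \<le> (2 * int M) div int N" using assms by (simp add: pos_imp_zdiv_nonneg_iff)
  moreover have "real (nat ((2 * int M) div int N + 1)) = real_of_int ((2 * int M) div int N) + 1"
    using calculation(2) by (metis of_int_1 of_int_add of_nat_nat zero_le_imp_eq_int le_add_same_cancel1 add_increasing2 zero_le_one nat_int)
  ultimately have "real (nat ((2 * int M) div int N + 1)) \<le> 2 * real M / real N + 1"
    by simp
  with c show ?thesis by linarith
qed

lemma quad:
  fixes a :: "int \<Rightarrow> complex"
  assumes N: "N > 0"
  shows "(\<Sum>l<N. (cmod (\<Sum>k\<in>{- int M..int M}. cnj (dft_entry N k l) * a k))\<^sup>2)
     \<le> real N * (2 * real M / real N + 1) * (\<Sum>k\<in>{- int M..int M}. (cmod (a k))\<^sup>2)"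
proof -
  let ?K = "{- int M..int M}"
  define g where "g k k' = (if int N dvd (k - k') then real N else 0)" for k k'
  have gsym: "g k k' = g k' k" for k k'
    unfolding g_def by (metis dvd_minus_iff minus_diff_eq)
  have gnn: "g k k' \<ge> 0" for k k' unfolding g_def by simp
  have "complex_of_real (\<Sum>l<N. (cmod (\<Sum>k\<in>?K. cnj (dft_entry N k l) * a k))\<^sup>2)
     = (\<Sum>l<N. (\<Sum>k\<in>?K. cnj (dft_entry N k l) * a k) * cnj (\<Sum>k\<in>?K. cnj (dft_entry N k l) * a k))"
    by (simp only: of_real_sum complex_norm_square)
  also have "\<dots> = (\<Sum>l<N. \<Sum>k\<in>?K. \<Sum>k'\<in>?K. a k * cnj (a k') * (cnj (dft_entry N k l) * dft_entry N k' l))"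
    by (simp add: sum_product algebra_simps)
  also have "\<dots> = (\<Sum>k\<in>?K. \<Sum>k'\<in>?K. a k * cnj (a k') * (\<Sum>l<N. cnj (dft_entry N k l) * dft_entry N k' l))"
    by (simp add: sum_distrib_left sum.swap[where A="{..<N}"])
  also have "\<dots> = (\<Sum>k\<in>?K. \<Sum>k'\<in>?K. a k * cnj (a k') * of_real (g k k'))"
    by (intro sum.cong refl) (simp add: geo[OF N] g_def)
  finally have eq: "complex_of_real (\<Sum>l<N. (cmod (\<Sum>k\<in>?K. cnj (dft_entry N k l) * a k))\<^sup>2) =
     (\<Sum>k\<in>?K. \<Sum>k'\<in>?K. a k * cnj (a k') * of_real (g k k'))" .
  have "(\<Sum>l<N. (cmod (\<Sum>k\<in>?K. cnj (dft_entry N k l) * a k))\<^sup>2)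
       = cmod (\<Sum>k\<in>?K. \<Sum>k'\<in>?K. a k * cnj (a k') * of_real (g k k'))"
    unfolding eq[symmetric] norm_of_real by (intro abs_of_nonneg[symmetric] sum_nonneg) simp
  also have "\<dots> \<le> (\<Sum>k\<in>?K. \<Sum>k'\<in>?K. cmod (a k * cnj (a k') * of_real (g k k')))"
    by (rule order_trans[OF norm_sum sum_mono[OF norm_sum]])
  also have "\<dots> = (\<Sum>k\<in>?K. \<Sum>k'\<in>?K. g k k' * (cmod (a k) * cmod (a k')))"
    by (simp add: norm_mult gnn abs_of_nonneg mult.commute)
  also have "\<dots> \<le> (\<Sum>k\<in>?K. \<Sum>k'\<in>?K. g k k' * (((cmod (a k))\<^sup>2 + (cmod (a k'))\<^sup>2) / 2))"
  proof (intro sum_mono mult_left_mono gnn)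
    fix k k'
    show "cmod (a k) * cmod (a k') \<le> ((cmod (a k))\<^sup>2 + (cmod (a k'))\<^sup>2) / 2"
      using sum_squares_bound[of "cmod (a k)" "cmod (a k')"] by simp
  qed
  also have "\<dots> = ((\<Sum>k\<in>?K. \<Sum>k'\<in>?K. g k k' * (cmod (a k))\<^sup>2) + (\<Sum>k\<in>?K. \<Sum>k'\<in>?K. g k k' * (cmod (a k'))\<^sup>2)) / 2"
    by (simp add: sum.distrib[symmetric] sum_divide_distrib[symmetric] distrib_left)
  also have "(\<Sum>k\<in>?K. \<Sum>k'\<in>?K. g k k' * (cmod (a k'))\<^sup>2) = (\<Sum>k\<in>?K. \<Sum>k'\<in>?K. g k k' * (cmod (a k))\<^sup>2)"
    by (subst sum.swap) (simp add: gsym)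
  also have "((\<Sum>k\<in>?K. \<Sum>k'\<in>?K. g k k' * (cmod (a k))\<^sup>2) + (\<Sum>k\<in>?K. \<Sum>k'\<in>?K. g k k' * (cmod (a k))\<^sup>2)) / 2
     = (\<Sum>k\<in>?K. (cmod (a k))\<^sup>2 * (real N * real (card {k'\<in>?K. int N dvd (k - k')})))"
  proof -
    have "(\<Sum>k'\<in>?K. g k k') = real N * real (card {k'\<in>?K. int N dvd (k - k')})" for k
      unfolding g_def by (simp add: sum.inter_filter[symmetric])
    then show ?thesis by (simp add: sum_distrib_left[symmetric] sum_distrib_right[symmetric] mult.commute)
  qed
  also have "\<dots> \<le> (\<Sum>k\<in>?K. (cmod (a k))\<^sup>2 * (real N * (2 * real M / real N + 1)))"
    by (intro sum_mono mult_left_mono count_res[OF N]) auto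
  also have "\<dots> = real N * (2 * real M / real N + 1) * (\<Sum>k\<in>?K. (cmod (a k))\<^sup>2)"
    by (simp add: sum_distrib_left mult.commute)
  finally show ?thesis .
qed

lemma bessel:
  assumes N: "N > 0"
  shows "(\<Sum>k\<in>{- int M..int M}. (cmod (F_M N M' v k))\<^sup>2)
     \<le> real N * (2 * real M / real N + 1) * (\<Sum>j<N. (v j)\<^sup>2)"
proof -
  let ?K = "{- int M..int M}"
  let ?c = "real N * (2 * real M / real N + 1)"
  define S where "S = (\<Sum>k\<in>?K. (cmod (F_M N M' v k))\<^sup>2)"
  define V where "V = (\<Sum>j<N. (v j)\<^sup>2)"
  define g where "g j = (\<Sum>k\<in>?K. cnj (dft_entry N k j) * F_M N M' v k)" for j
  define G where "G = (\<Sum>j<N. (cmod (g j))\<^sup>2)"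
  have G: "G \<le> ?c * S" unfolding G_def g_def S_def by (rule quad[OF N])
  have "complex_of_real S = (\<Sum>k\<in>?K. cnj (F_M N M' v k) * F_M N M' v k)"
    unfolding S_def by (simp only: of_real_sum complex_norm_square mult.commute)
  also have "\<dots> = (\<Sum>k\<in>?K. \<Sum>j<N. cnj (F_M N M' v k) * (dft_entry N k j * complex_of_real (v j)))"
    by (simp add: F_M_def sum_distrib_left)
  also have "\<dots> = (\<Sum>j<N. complex_of_real (v j) * cnj (g j))"
    unfolding g_def by (subst sum.swap) (simp add: sum_distrib_left algebra_simps)
  finally have eqS: "complex_of_real S = (\<Sum>j<N. complex_of_real (v j) * cnj (g j))" .
  have S0: "S \<ge> 0" unfolding S_def by (simp add: sum_nonneg)
  have "S = cmod (complex_of_real S)" using S0 by simp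
  also have "\<dots> \<le> (\<Sum>j<N. \<bar>v j\<bar> * \<bar>cmod (g j)\<bar>)"
    unfolding eqS by (rule order_trans[OF norm_sum]) (simp add: norm_mult)
  also have "\<dots> \<le> L2_set v {..<N} * L2_set (\<lambda>j. cmod (g j)) {..<N}"
    by (rule L2_set_mult_ineq)
  also have "\<dots> = sqrt V * sqrt G" unfolding L2_set_def V_def G_def by simp
  finally have "S \<le> sqrt V * sqrt G" .
  then have "S\<^sup>2 \<le> (sqrt V * sqrt G)\<^sup>2" using S0 by (simp add: power_mono)
  also have "\<dots> = V * G" unfolding V_def G_def by (simp add: power_mult_distrib sum_nonneg)
  also have "\<dots> \<le> V * (?c * S)" using G by (intro mult_left_mono) (auto simp: V_def sum_nonneg)
  finally have "S * S \<le> (V * ?c) * S" by (simp add: power2_eq_square algebra_simps)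
  then have "S \<le> V * ?c" using S0
    by (cases "S = 0") (auto simp: V_def sum_nonneg intro: mult_nonneg_nonneg)
  then show ?thesis unfolding S_def V_def by (simp add: mult.commute)
qed

lemma PM_bound:
  assumes N: "N > 0"
  shows "(l2norm N (P_M N M w))\<^sup>2 \<le> (2 * real M / real N + 1) / real N * (\<Sum>k\<in>{- int M..int M}. (cmod (F_M N M w k))\<^sup>2)"
proof -
  have "(l2norm N (P_M N M w))\<^sup>2 = (\<Sum>l<N. (cmod (P_M N M w l))\<^sup>2)"
    unfolding l2norm_def by (simp add: sum_nonneg)
  also have "\<dots> = (\<Sum>l<N. (1 / real N)\<^sup>2 * (cmod (\<Sum>k\<in>{- int M..int M}. cnj (dft_entry N k l) * F_M N M w k))\<^sup>2)"
    unfolding P_M_def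
    by (intro sum.cong refl, simp only: norm_mult power_mult_distrib) (simp add: norm_divide)
  also have "\<dots> = (1 / real N)\<^sup>2 * (\<Sum>l<N. (cmod (\<Sum>k\<in>{- int M..int M}. cnj (dft_entry N k l) * F_M N M w k))\<^sup>2)"
    by (rule sum_distrib_left[symmetric])
  also have "\<dots> \<le> (1 / real N)\<^sup>2 * (real N * (2 * real M / real N + 1) * (\<Sum>k\<in>{- int M..int M}. (cmod (F_M N M w k))\<^sup>2))"
    by (intro mult_left_mono quad[OF N]) simp
  also have "\<dots> = (2 * real M / real N + 1) / real N * (\<Sum>k\<in>{- int M..int M}. (cmod (F_M N M w k))\<^sup>2)"
    using N by (simp add: power2_eq_square)
  finally show ?thesis .
qed

lemma Dmat_Dinv: "Dmat N (Dinv N v) = v"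
proof
  fix i show "Dmat N (Dinv N v) i = v i"
    by (cases i) (simp_all add: Dmat_def Dinv_def)
qed

lemma Dmat_Dinv_pow: "(Dmat N ^^ r) ((Dinv N ^^ r) v) = v"
proof (induction r arbitrary: v)
  case 0 then show ?case by simp
next
  case (Suc r)
  have e1: "(Dinv N ^^ Suc r) v = Dinv N ((Dinv N ^^ r) v)" by simp
  have e2: "(Dmat N ^^ Suc r) w = (Dmat N ^^ r) (Dmat N w)" for w by (simp add: funpow_swap1)
  have "(Dmat N ^^ Suc r) ((Dinv N ^^ Suc r) v) = (Dmat N ^^ r) (Dmat N ((Dinv N) ((Dinv N ^^ r) v)))"
    unfolding e1 e2 ..
  also have "\<dots> = v" by (simp add: Dmat_Dinv Suc.IH)
  finally show ?case .
qed

lemma Dinv_pow_diff: "(Dinv N ^^ r) (\<lambda>j. f j - g j) = (\<lambda>i. (Dinv N ^^ r) f i - (Dinv N ^^ r) g i)"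
proof (induction r)
  case 0 then show ?case by simp
next
  case (Suc r) then show ?case by (simp add: Dinv_def sum_subtractf)
qed

lemma D1_pow_bound:
  assumes "\<forall>i<N. \<bar>v i\<bar> \<le> B"
  shows "\<forall>i<N. \<bar>(D1mat N ^^ n) v i\<bar> \<le> 2 ^ n * B"
proof (induction n)
  case 0 then show ?case using assms by simp
next
  case (Suc n)
  show ?case
  proof (intro allI impI)
    fix i assume i: "i < N"
    have m: "(i + N - 1) mod N < N" using i by simp
    have "\<bar>(D1mat N ^^ Suc n) v i\<bar> \<le> \<bar>(D1mat N ^^ n) v i\<bar> + \<bar>(D1mat N ^^ n) v ((i + N - 1) mod N)\<bar>"
      by (simp add: D1mat_def)
    also have "\<dots> \<le> 2 ^ n * B + 2 ^ n * B"
      using Suc i m by (intro add_mono) auto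
    finally show "\<bar>(D1mat N ^^ Suc n) v i\<bar> \<le> 2 ^ Suc n * B" by (simp add: algebra_simps)
  qed
qed

lemma Dmat_pow_bdry:
  assumes "\<forall>i<N. a \<le> i \<longrightarrow> \<bar>u i\<bar> \<le> \<eta>"
  shows "\<forall>i<N. (a = 0 \<or> a + m \<le> i) \<longrightarrow> \<bar>(Dmat N ^^ m) u i\<bar> \<le> 2 ^ m * \<eta>"
proof (induction m)
  case 0 then show ?case using assms by auto
next
  case (Suc m)
  show ?case
  proof (intro allI impI)
    fix i assume i: "i < N" and h: "a = 0 \<or> a + Suc m \<le> i"
    have A: "\<bar>(Dmat N ^^ m) u i\<bar> \<le> 2 ^ m * \<eta>" using Suc i h by auto
    have B: "\<bar>if i = 0 then 0 else (Dmat N ^^ m) u (i - 1)\<bar> \<le> 2 ^ m * \<eta>"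
    proof (cases "i = 0")
      case True
      have "0 \<le> \<bar>(Dmat N ^^ m) u i\<bar>" by simp
      with A True show ?thesis by simp
    next
      case False
      then have "i - 1 < N" "a = 0 \<or> a + m \<le> i - 1" using i h by auto
      then have "\<bar>(Dmat N ^^ m) u (i - 1)\<bar> \<le> 2 ^ m * \<eta>" using Suc.IH by blast
      then show ?thesis using False by simp
    qed
    have "\<bar>(Dmat N ^^ Suc m) u i\<bar> \<le> \<bar>(Dmat N ^^ m) u i\<bar> + \<bar>if i = 0 then 0 else (Dmat N ^^ m) u (i - 1)\<bar>"
      by (simp add: Dmat_def)
    also have "\<dots> \<le> 2 ^ m * \<eta> + 2 ^ m * \<eta>" using A B by (rule add_mono)
    finally show "\<bar>(Dmat N ^^ Suc m) u i\<bar> \<le> 2 ^ Suc m * \<eta>" by (simp add: algebra_simps)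
  qed
qed

lemma F_D1_pow: assumes "N > 0"
  shows "F_M N M ((D1mat N ^^ n) v) k = (1 - zz N k) ^ n * F_M N M v k"
  by (induction n) (simp_all add: F_D1mat[OF assms])

lemma F_Dmat_pow: assumes N: "N > 0" and h: "\<forall>m<n. \<bar>(Dmat N ^^ m) u (N - 1)\<bar> \<le> 2 ^ m * \<eta>"
  shows "cmod (F_M N M ((Dmat N ^^ n) u) k - (1 - zz N k) ^ n * F_M N M u k) \<le> real n * 2 ^ n * \<eta>"
  using h
proof (induction n)
  case 0 then show ?case by simp
next
  case (Suc n)
  have IH: "cmod (F_M N M ((Dmat N ^^ n) u) k - (1 - zz N k) ^ n * F_M N M u k) \<le> real n * 2 ^ n * \<eta>"
    using Suc by simp
  have hn: "\<bar>(Dmat N ^^ n) u (N - 1)\<bar> \<le> 2 ^ n * \<eta>" using Suc.prems by simp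
  have "F_M N M ((Dmat N ^^ Suc n) u) k - (1 - zz N k) ^ Suc n * F_M N M u k
     = (1 - zz N k) * (F_M N M ((Dmat N ^^ n) u) k - (1 - zz N k) ^ n * F_M N M u k) + (Dmat N ^^ n) u (N - 1)"
    by (simp add: F_Dmat[OF N] algebra_simps)
  then have "cmod (F_M N M ((Dmat N ^^ Suc n) u) k - (1 - zz N k) ^ Suc n * F_M N M u k)
     \<le> cmod (1 - zz N k) * cmod (F_M N M ((Dmat N ^^ n) u) k - (1 - zz N k) ^ n * F_M N M u k) + \<bar>(Dmat N ^^ n) u (N - 1)\<bar>"
    using norm_triangle_ineq[of "(1 - zz N k) * (F_M N M ((Dmat N ^^ n) u) k - (1 - zz N k) ^ n * F_M N M u k)" "complex_of_real ((Dmat N ^^ n) u (N - 1))"]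
    by (simp only: norm_mult norm_of_real)
  also have "\<dots> \<le> 2 * (real n * 2 ^ n * \<eta>) + 2 ^ n * \<eta>"
    by (intro add_mono mult_mono norm_1_zz2 IH hn) auto
  also have "\<dots> \<le> real (Suc n) * 2 ^ Suc n * \<eta>"
  proof -
    have "0 \<le> (2::real) ^ n * \<eta>" using hn abs_ge_zero order_trans by blast
    moreover have p: "(0::real) < 2 ^ n" by simp
    ultimately have "\<eta> \<ge> 0" by (auto simp: zero_le_mult_iff)
    then show ?thesis by (simp add: algebra_simps)
  qed
  finally show ?case .
qed

lemma large_case:
  assumes N: "N > 0" and L: "real N < 2 * real M" and s1: "s \<ge> 1"
    and hw: "\<forall>i<N. \<bar>w i\<bar> \<le> 2 ^ s * \<delta>"
  shows "(l2norm N (P_M N M w))\<^sup>2 \<le> (2 ^ (2 * s + 1))\<^sup>2 * (real M / real N) ^ (2 * s) * real N * \<delta>\<^sup>2"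
proof -
  define c where "c = 2 * real M / real N + 1"
  define t where "t = real M / real N"
  have t2: "2 * t > 1" using L N unfolding t_def by (simp add: field_simps)
  have c4: "c \<le> 4 * t" using t2 unfolding c_def t_def by simp
  have c0: "c \<ge> 0" unfolding c_def by simp
  have d0: "2 ^ s * \<delta> \<ge> 0" using hw N by (meson abs_ge_zero order_trans)
  have ws: "(\<Sum>j<N. (w j)\<^sup>2) \<le> real N * (2 ^ s * \<delta>)\<^sup>2"
  proof -
    have "(\<Sum>j<N. (w j)\<^sup>2) \<le> (\<Sum>j<N. (2 ^ s * \<delta>)\<^sup>2)"
      using hw by (intro sum_mono) (simp add: abs_le_square_iff[symmetric] abs_of_nonneg d0)
    then show ?thesis by simp
  qed
  have "(l2norm N (P_M N M w))\<^sup>2 \<le> c / real N * (\<Sum>k\<in>{- int M..int M}. (cmod (F_M N M w k))\<^sup>2)"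
    unfolding c_def by (rule PM_bound[OF N])
  also have "\<dots> \<le> c / real N * (real N * c * (\<Sum>j<N. (w j)\<^sup>2))"
    unfolding c_def by (intro mult_left_mono bessel[OF N]) simp
  also have "\<dots> = c\<^sup>2 * (\<Sum>j<N. (w j)\<^sup>2)" using N by (simp add: power2_eq_square)
  also have "\<dots> \<le> (4 * t)\<^sup>2 * (real N * (2 ^ s * \<delta>)\<^sup>2)"
    using c4 c0 ws by (intro mult_mono power_mono) (auto simp: sum_nonneg)
  also have "\<dots> \<le> (2 ^ (2 * s + 1))\<^sup>2 * t ^ (2 * s) * real N * \<delta>\<^sup>2"
  proof -
    have "1 \<le> (2 * t) ^ (s - 1)" using t2 by (intro one_le_power) simp
    then have "t \<le> 2 ^ (s - 1) * t ^ (s - 1) * t" using t2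
      by (simp add: power_mult_distrib)
    also have "\<dots> = 2 ^ (s - 1) * t ^ s" using s1 by (simp add: power_eq_if mult.commute mult.left_commute)
    finally have tt: "t \<le> 2 ^ (s - 1) * t ^ s" .
    have "4 * t \<le> 2 ^ (s + 1) * t ^ s"
    proof -
      have "4 * t \<le> 4 * (2 ^ (s - 1) * t ^ s)" using tt by simp
      also have "\<dots> = 2 ^ (s + 1) * t ^ s" using s1
        by (cases s) (simp_all add: algebra_simps)
      finally show ?thesis .
    qed
    then have "(4 * t)\<^sup>2 \<le> (2 ^ (s + 1) * t ^ s)\<^sup>2" using t2 by (intro power_mono) auto
    then have "(4 * t)\<^sup>2 * (real N * (2 ^ s * \<delta>)\<^sup>2) \<le> (2 ^ (s + 1) * t ^ s)\<^sup>2 * (real N * (2 ^ s * \<delta>)\<^sup>2)"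
      by (intro mult_right_mono) auto
    also have "\<dots> = (2 ^ (2 * s + 1))\<^sup>2 * t ^ (2 * s) * real N * \<delta>\<^sup>2"
    proof -
      have a: "((2::real) ^ (s + 1) * t ^ s)\<^sup>2 = 2 ^ (2 * s + 2) * t ^ (2 * s)"
        by (simp add: power_mult_distrib flip: power_mult; simp add: mult.commute)
      have b: "((2::real) ^ s * \<delta>)\<^sup>2 = 2 ^ (2 * s) * \<delta>\<^sup>2"
        by (simp add: power_mult_distrib flip: power_mult; simp add: mult.commute)
      have c: "((2::real) ^ (2 * s + 1))\<^sup>2 = 2 ^ (2 * s + 2) * 2 ^ (2 * s)"
        by (simp flip: power_mult power_add; simp add: algebra_simps)
      show ?thesis unfolding a b c by (simp add: algebra_simps)
    qed
    finally show ?thesis .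
  qed
  finally show ?thesis unfolding t_def .
qed

lemma aux_ineq:
  assumes N: "N > 0" and M: "M > 0" and r1: "r \<ge> 1"
  shows "(2 * real M + 1) / real N * (1 / real N) ^ (2 * r) \<le> 3 * (real M / real N) ^ (2 * r) * real N"
proof -
  define t where "t = real M / real N"
  have tN: "t \<ge> 1 / real N" unfolding t_def using M N by (simp add: divide_right_mono)
  have t0: "t > 0" unfolding t_def using M N by simp
  have "(2 * real M + 1) / real N \<le> 3 * t" unfolding t_def using M N by (simp add: field_simps)
  then have "(2 * real M + 1) / real N * (1 / real N) ^ (2 * r) \<le> 3 * t * (1 / real N) ^ (2 * r)"
    by (intro mult_right_mono) auto
  also have "\<dots> \<le> 3 * t ^ (2 * r) * real N"
  proof -
    have p: "(1 / real N) ^ (2 * r - 1) \<le> t ^ (2 * r - 1)" using tN by (intro power_mono) auto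
    have e1: "(1 / real N) ^ (2 * r) = (1 / real N) * (1 / real N) ^ (2 * r - 1)"
      using r1 by (simp add: power_Suc[symmetric] del: power_Suc) 
    have e2: "t ^ (2 * r) = t * t ^ (2 * r - 1)"
      using r1 by (simp add: power_Suc[symmetric] del: power_Suc)
    have "3 * t * (1 / real N) ^ (2 * r) \<le> 3 * t * (1 / real N) ^ (2 * r - 1)"
      unfolding e1 using N by (intro mult_left_mono) (auto simp: field_simps t0 less_imp_le)
    also have "\<dots> \<le> 3 * t * t ^ (2 * r - 1)" using p t0 by (intro mult_left_mono) auto
    also have "\<dots> \<le> 3 * t * t ^ (2 * r - 1) * real N" using N t0 by simp
    finally show ?thesis unfolding e2 by (simp add: algebra_simps)
  qed
  finally show ?thesis unfolding t_def .
qed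

lemma small_case:
  assumes N: "N > 0" and M: "M > 0" and S: "2 * M \<le> N" and r1: "r \<ge> 1" and d0: "\<delta> \<ge> 0"
    and hu: "\<forall>i<N. \<bar>u i\<bar> \<le> \<delta>"
    and hb: "\<forall>i<N. N - r \<le> i \<longrightarrow> \<bar>u i\<bar> \<le> \<eta>"
    and eta: "\<eta> = 2 * (1 / (2 * real N)) ^ r * \<delta>"
  shows "(l2norm N (P_M N M ((D1mat N ^^ \<beta>) ((Dmat N ^^ r) u))))\<^sup>2
    \<le> (8 * (2 * pi) ^ (2 * (r + \<beta>)) + 48 * (real r)\<^sup>2 * (2 * pi) ^ (2 * \<beta>)) * (real M / real N) ^ (2 * (r + \<beta>)) * real N * \<delta>\<^sup>2"
proof -
  let ?K = "{- int M..int M}"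
  define w where "w = (D1mat N ^^ \<beta>) ((Dmat N ^^ r) u)"
  define t where "t = real M / real N"
  define \<rho> where "\<rho> = 2 * pi * real M / real N"
  define c where "c = 2 * real M / real N + 1"
  define b where "b = real r * 2 ^ r * \<eta>"
  have \<rho>t: "\<rho> = 2 * pi * t" unfolding \<rho>_def t_def by simp
  have \<rho>0: "\<rho> \<ge> 0" unfolding \<rho>_def by simp
  have c2: "c \<le> 2" unfolding c_def using S N by (simp add: field_simps)
  have e0: "\<eta> \<ge> 0" unfolding eta using d0 by simp
  have b0: "b \<ge> 0" unfolding b_def using e0 by simp
  have hbd: "\<forall>m<r. \<bar>(Dmat N ^^ m) u (N - 1)\<bar> \<le> 2 ^ m * \<eta>"
  proof (intro allI impI)
    fix m assume m: "m < r"
    have "N - r = 0 \<or> N - r + m \<le> N - 1" using m N by auto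
    then show "\<bar>(Dmat N ^^ m) u (N - 1)\<bar> \<le> 2 ^ m * \<eta>"
      using Dmat_pow_bdry[OF hb, of m] N by auto
  qed
  have usq: "(\<Sum>j<N. (u j)\<^sup>2) \<le> real N * \<delta>\<^sup>2"
  proof -
    have "(\<Sum>j<N. (u j)\<^sup>2) \<le> (\<Sum>j<N. \<delta>\<^sup>2)"
      using hu by (intro sum_mono) (simp add: abs_le_square_iff[symmetric] abs_of_nonneg d0)
    then show ?thesis by simp
  qed
  have A: "(\<Sum>k\<in>?K. (cmod (F_M N M u k))\<^sup>2) \<le> 2 * real N * (real N * \<delta>\<^sup>2)"
  proof -
    have "(\<Sum>k\<in>?K. (cmod (F_M N M u k))\<^sup>2) \<le> real N * c * (\<Sum>j<N. (u j)\<^sup>2)"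
      unfolding c_def by (rule bessel[OF N])
    also have "\<dots> \<le> real N * 2 * (real N * \<delta>\<^sup>2)"
      using c2 usq by (intro mult_mono) (auto simp: c_def sum_nonneg)
    finally show ?thesis by simp
  qed
  have pt: "(cmod (F_M N M w k))\<^sup>2 \<le> (\<rho> ^ \<beta>)\<^sup>2 * (2 * (\<rho> ^ r)\<^sup>2 * (cmod (F_M N M u k))\<^sup>2 + 2 * b\<^sup>2)"
    if k: "k \<in> ?K" for k
  proof -
    have kz: "cmod (1 - zz N k) \<le> \<rho>" unfolding \<rho>_def using k by (intro norm_1_zz[OF N]) auto
    have Bk: "cmod (F_M N M ((Dmat N ^^ r) u) k - (1 - zz N k) ^ r * F_M N M u k) \<le> b"
      unfolding b_def by (rule F_Dmat_pow[OF N hbd])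
    have "cmod (F_M N M ((Dmat N ^^ r) u) k) \<le> cmod ((1 - zz N k) ^ r * F_M N M u k) + b"
      using Bk norm_triangle_ineq2[of "F_M N M ((Dmat N ^^ r) u) k" "(1 - zz N k) ^ r * F_M N M u k"] by linarith
    also have "\<dots> \<le> \<rho> ^ r * cmod (F_M N M u k) + b"
      unfolding norm_mult norm_power by (intro add_mono mult_right_mono power_mono kz) auto
    finally have h1: "cmod (F_M N M ((Dmat N ^^ r) u) k) \<le> \<rho> ^ r * cmod (F_M N M u k) + b" .
    have "cmod (F_M N M w k) = cmod (1 - zz N k) ^ \<beta> * cmod (F_M N M ((Dmat N ^^ r) u) k)"
      unfolding w_def F_D1_pow[OF N] by (simp add: norm_mult norm_power)
    also have "\<dots> \<le> \<rho> ^ \<beta> * (\<rho> ^ r * cmod (F_M N M u k) + b)"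
      by (intro mult_mono power_mono kz h1) (auto simp: \<rho>0)
    finally have h2: "cmod (F_M N M w k) \<le> \<rho> ^ \<beta> * (\<rho> ^ r * cmod (F_M N M u k) + b)" .
    then have "(cmod (F_M N M w k))\<^sup>2 \<le> (\<rho> ^ \<beta> * (\<rho> ^ r * cmod (F_M N M u k) + b))\<^sup>2"
      by (intro power_mono) auto
    also have "\<dots> = (\<rho> ^ \<beta>)\<^sup>2 * (\<rho> ^ r * cmod (F_M N M u k) + b)\<^sup>2" by (simp add: power_mult_distrib)
    also have "\<dots> \<le> (\<rho> ^ \<beta>)\<^sup>2 * (2 * (\<rho> ^ r)\<^sup>2 * (cmod (F_M N M u k))\<^sup>2 + 2 * b\<^sup>2)"
    proof (intro mult_left_mono)
      have "(\<rho> ^ r * cmod (F_M N M u k) + b)\<^sup>2 \<le> 2 * (\<rho> ^ r * cmod (F_M N M u k))\<^sup>2 + 2 * b\<^sup>2"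
        using sum_squares_bound[of "\<rho> ^ r * cmod (F_M N M u k)" b] by (simp add: power2_eq_square algebra_simps)
      then show "(\<rho> ^ r * cmod (F_M N M u k) + b)\<^sup>2 \<le> 2 * (\<rho> ^ r)\<^sup>2 * (cmod (F_M N M u k))\<^sup>2 + 2 * b\<^sup>2"
        by (simp add: power_mult_distrib)
    qed simp
    finally show ?thesis .
  qed
  have cardK: "real (card ?K) = 2 * real M + 1" by simp
  have "(l2norm N (P_M N M w))\<^sup>2 \<le> c / real N * (\<Sum>k\<in>?K. (cmod (F_M N M w k))\<^sup>2)"
    unfolding c_def by (rule PM_bound[OF N])
  also have "\<dots> \<le> 2 / real N * (\<Sum>k\<in>?K. (\<rho> ^ \<beta>)\<^sup>2 * (2 * (\<rho> ^ r)\<^sup>2 * (cmod (F_M N M u k))\<^sup>2 + 2 * b\<^sup>2))"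
    using c2 N by (intro mult_mono sum_mono pt divide_right_mono) (auto simp: sum_nonneg)
  also have "\<dots> = 2 / real N * ((\<rho> ^ \<beta>)\<^sup>2 * (2 * (\<rho> ^ r)\<^sup>2 * (\<Sum>k\<in>?K. (cmod (F_M N M u k))\<^sup>2) + (2 * real M + 1) * (2 * b\<^sup>2)))"
    by (simp add: sum.distrib sum_distrib_left[symmetric] cardK)
  also have "\<dots> \<le> 2 / real N * ((\<rho> ^ \<beta>)\<^sup>2 * (2 * (\<rho> ^ r)\<^sup>2 * (2 * real N * (real N * \<delta>\<^sup>2)) + (2 * real M + 1) * (2 * b\<^sup>2)))"
    using A by (intro mult_left_mono add_mono) auto
  also have "\<dots> = 8 * (\<rho> ^ (r + \<beta>))\<^sup>2 * real N * \<delta>\<^sup>2 + 4 * (\<rho> ^ \<beta>)\<^sup>2 * b\<^sup>2 * ((2 * real M + 1) / real N)"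
    using N by (simp add: field_simps power_add power_mult_distrib)
  also have "\<dots> \<le> (8 * (2 * pi) ^ (2 * (r + \<beta>)) + 48 * (real r)\<^sup>2 * (2 * pi) ^ (2 * \<beta>)) * t ^ (2 * (r + \<beta>)) * real N * \<delta>\<^sup>2"
  proof -
    have t1: "8 * (\<rho> ^ (r + \<beta>))\<^sup>2 * real N * \<delta>\<^sup>2 = 8 * (2 * pi) ^ (2 * (r + \<beta>)) * t ^ (2 * (r + \<beta>)) * real N * \<delta>\<^sup>2"
      unfolding \<rho>t by (simp add: power_mult_distrib flip: power_mult; simp add: mult.commute)
    have bb: "b\<^sup>2 = 4 * (real r)\<^sup>2 * (1 / real N) ^ (2 * r) * \<delta>\<^sup>2"
    proof -
      have "b\<^sup>2 = (real r)\<^sup>2 * (2 ^ r * (2 * (1 / (2 * real N)) ^ r))\<^sup>2 * \<delta>\<^sup>2"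
        unfolding b_def eta by (simp add: power_mult_distrib algebra_simps)
      also have "2 ^ r * (2 * (1 / (2 * real N)) ^ r) = 2 * (1 / real N) ^ r"
        by (simp add: power_divide)
      finally show ?thesis by (simp add: power_mult_distrib flip: power_mult; simp add: mult.commute)
    qed
    have t2: "4 * (\<rho> ^ \<beta>)\<^sup>2 * b\<^sup>2 * ((2 * real M + 1) / real N)
       = 16 * (real r)\<^sup>2 * (2 * pi) ^ (2 * \<beta>) * t ^ (2 * \<beta>) * \<delta>\<^sup>2 * ((2 * real M + 1) / real N * (1 / real N) ^ (2 * r))"
      unfolding bb \<rho>t by (simp add: power_mult_distrib flip: power_mult; simp add: algebra_simps)
    have t3: "16 * (real r)\<^sup>2 * (2 * pi) ^ (2 * \<beta>) * t ^ (2 * \<beta>) * \<delta>\<^sup>2 * ((2 * real M + 1) / real N * (1 / real N) ^ (2 * r))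
       \<le> 16 * (real r)\<^sup>2 * (2 * pi) ^ (2 * \<beta>) * t ^ (2 * \<beta>) * \<delta>\<^sup>2 * (3 * t ^ (2 * r) * real N)"
      unfolding t_def by (intro mult_left_mono aux_ineq[OF N M r1]) auto
    have t4: "16 * (real r)\<^sup>2 * (2 * pi) ^ (2 * \<beta>) * t ^ (2 * \<beta>) * \<delta>\<^sup>2 * (3 * t ^ (2 * r) * real N)
       = 48 * (real r)\<^sup>2 * (2 * pi) ^ (2 * \<beta>) * t ^ (2 * (r + \<beta>)) * real N * \<delta>\<^sup>2"
      by (simp add: power_add algebra_simps)
    have "8 * (\<rho> ^ (r + \<beta>))\<^sup>2 * real N * \<delta>\<^sup>2 + 4 * (\<rho> ^ \<beta>)\<^sup>2 * b\<^sup>2 * ((2 * real M + 1) / real N)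
      \<le> 8 * (2 * pi) ^ (2 * (r + \<beta>)) * t ^ (2 * (r + \<beta>)) * real N * \<delta>\<^sup>2 + 48 * (real r)\<^sup>2 * (2 * pi) ^ (2 * \<beta>) * t ^ (2 * (r + \<beta>)) * real N * \<delta>\<^sup>2"
      using t1 t2 t3 t4 by linarith
    then show ?thesis by (simp only: distrib_right)
  qed
  finally show ?thesis unfolding w_def t_def .
qed

theorem lemma1:
  fixes r \<beta> :: nat
  assumes "r \<ge> 2" and "\<beta> \<in> {1, 2}"
  shows "\<exists>C::real. \<forall>(N::nat) (M::nat) (\<delta>::real) (x::nat \<Rightarrow> real) (q::nat \<Rightarrow> real).
    N > 0 \<and> M > 0 \<and>
    (\<forall>i<N. 0 \<le> x i \<and> x i \<le> 1) \<and>
    min_sep N M ((D1mat N ^^ \<beta>) x) \<and>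
    (\<forall>i<N. \<bar>(Dinv N ^^ r) (\<lambda>j. x j - q j) i\<bar> \<le> \<delta> / 2) \<and>
    (\<forall>i. N - r \<le> i \<and> i < N \<longrightarrow>
        \<bar>(Dinv N ^^ r) (\<lambda>j. x j - q j) i\<bar> \<le> (1 / (2 * real N)) ^ r * \<delta>)
    \<longrightarrow>
    (\<forall>xt::nat \<Rightarrow> real.
       (\<forall>i<N. \<bar>(Dinv N ^^ r) (\<lambda>j. xt j - q j) i\<bar> \<le> \<delta> / 2) \<and>
       (\<forall>i. N - r \<le> i \<and> i < N \<longrightarrow>
          \<bar>(Dinv N ^^ r) (\<lambda>j. xt j - q j) i\<bar> \<le> (1 / (2 * real N)) ^ r * \<delta>)
       \<longrightarrow>
       l2norm N (P_M N M ((D1mat N ^^ \<beta>) (\<lambda>j. xt j - x j)))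
         \<le> C * (real M / real N) ^ (r + \<beta>) * sqrt (real N) * \<delta>)"
proof -
  have r1: "r \<ge> 1" using assms(1) by simp
  have s1: "r + \<beta> \<ge> 1" using r1 by simp
  define K1 :: real where "K1 = 8 * (2 * pi) ^ (2 * (r + \<beta>)) + 48 * (real r)\<^sup>2 * (2 * pi) ^ (2 * \<beta>)"
  define K2 :: real where "K2 = (2 ^ (2 * (r + \<beta>) + 1))\<^sup>2"
  define C where "C = sqrt K1 + sqrt K2"
  have K10: "K1 \<ge> 0" unfolding K1_def by simp
  have K20: "K2 \<ge> 0" unfolding K2_def by simp
  have C0: "C \<ge> 0" unfolding C_def using K10 K20 by simp
  have K1C: "K1 \<le> C\<^sup>2"
  proof -
    have "sqrt K1 \<le> C" unfolding C_def using K20 by simp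
    then have "(sqrt K1)\<^sup>2 \<le> C\<^sup>2" using K10 by (intro power_mono) auto
    then show ?thesis using K10 by simp
  qed
  have K2C: "K2 \<le> C\<^sup>2"
  proof -
    have "sqrt K2 \<le> C" unfolding C_def using K10 by simp
    then have "(sqrt K2)\<^sup>2 \<le> C\<^sup>2" using K20 by (intro power_mono) auto
    then show ?thesis using K20 by simp
  qed
  show ?thesis
  proof (rule exI[of _ C], intro allI, rule impI, elim conjE)
    fix N M :: nat and \<delta> :: real and x q :: "nat \<Rightarrow> real"
    assume N: "N > 0" and M: "M > 0"
      and hx1: "\<forall>i<N. \<bar>(Dinv N ^^ r) (\<lambda>j. x j - q j) i\<bar> \<le> \<delta> / 2"
      and hx2: "\<forall>i. N - r \<le> i \<and> i < N \<longrightarrow> \<bar>(Dinv N ^^ r) (\<lambda>j. x j - q j) i\<bar> \<le> (1 / (2 * real N)) ^ r * \<delta>"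
    show "\<forall>xt::nat \<Rightarrow> real.
       (\<forall>i<N. \<bar>(Dinv N ^^ r) (\<lambda>j. xt j - q j) i\<bar> \<le> \<delta> / 2) \<and>
       (\<forall>i. N - r \<le> i \<and> i < N \<longrightarrow>
          \<bar>(Dinv N ^^ r) (\<lambda>j. xt j - q j) i\<bar> \<le> (1 / (2 * real N)) ^ r * \<delta>)
       \<longrightarrow>
       l2norm N (P_M N M ((D1mat N ^^ \<beta>) (\<lambda>j. xt j - x j)))
         \<le> C * (real M / real N) ^ (r + \<beta>) * sqrt (real N) * \<delta>"
    proof (intro allI impI, elim conjE)
      fix xt :: "nat \<Rightarrow> real"
      assume ht1: "\<forall>i<N. \<bar>(Dinv N ^^ r) (\<lambda>j. xt j - q j) i\<bar> \<le> \<delta> / 2"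
        and ht2: "\<forall>i. N - r \<le> i \<and> i < N \<longrightarrow> \<bar>(Dinv N ^^ r) (\<lambda>j. xt j - q j) i\<bar> \<le> (1 / (2 * real N)) ^ r * \<delta>"
      define u where "u = (Dinv N ^^ r) (\<lambda>j. xt j - x j)"
      define \<eta> where "\<eta> = 2 * (1 / (2 * real N)) ^ r * \<delta>"
      define t where "t = real M / real N"
      have d0: "\<delta> \<ge> 0"
      proof -
        have "\<bar>(Dinv N ^^ r) (\<lambda>j. x j - q j) 0\<bar> \<le> \<delta> / 2" using hx1 N by blast
        then show ?thesis by linarith
      qed
      have "(\<lambda>j. xt j - x j) = (\<lambda>j. (xt j - q j) - (x j - q j))" by simp
      then have ueq: "u i = (Dinv N ^^ r) (\<lambda>j. xt j - q j) i - (Dinv N ^^ r) (\<lambda>j. x j - q j) i" for i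
        unfolding u_def by (simp only: Dinv_pow_diff)
      have hu: "\<forall>i<N. \<bar>u i\<bar> \<le> \<delta>"
      proof (intro allI impI)
        fix i assume i: "i < N"
        show "\<bar>u i\<bar> \<le> \<delta>" unfolding ueq
          using hx1[rule_format, OF i] ht1[rule_format, OF i]
            abs_triangle_ineq4[of "(Dinv N ^^ r) (\<lambda>j. xt j - q j) i" "(Dinv N ^^ r) (\<lambda>j. x j - q j) i"]
          by linarith
      qed
      have hb: "\<forall>i<N. N - r \<le> i \<longrightarrow> \<bar>u i\<bar> \<le> \<eta>"
      proof (intro allI impI)
        fix i assume i: "i < N" "N - r \<le> i"
        have ee: "\<eta> = (1 / (2 * real N)) ^ r * \<delta> + (1 / (2 * real N)) ^ r * \<delta>" unfolding \<eta>_def by simp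
        show "\<bar>u i\<bar> \<le> \<eta>" unfolding ueq ee
          using hx2[rule_format, OF conjI[OF i(2) i(1)]] ht2[rule_format, OF conjI[OF i(2) i(1)]]
            abs_triangle_ineq4[of "(Dinv N ^^ r) (\<lambda>j. xt j - q j) i" "(Dinv N ^^ r) (\<lambda>j. x j - q j) i"]
          by linarith
      qed
      have e: "(\<lambda>j. xt j - x j) = (Dmat N ^^ r) u" unfolding u_def by (simp only: Dmat_Dinv_pow)
      define Pn where "Pn = l2norm N (P_M N M ((D1mat N ^^ \<beta>) (\<lambda>j. xt j - x j)))"
      have Pn0: "Pn \<ge> 0" unfolding Pn_def l2norm_def by (simp add: sum_nonneg)
      have sq: "Pn\<^sup>2 \<le> C\<^sup>2 * t ^ (2 * (r + \<beta>)) * real N * \<delta>\<^sup>2"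
      proof (cases "2 * M \<le> N")
        case True
        have "Pn\<^sup>2 \<le> K1 * t ^ (2 * (r + \<beta>)) * real N * \<delta>\<^sup>2"
          unfolding Pn_def e K1_def t_def by (rule small_case[OF N M True r1 d0 hu hb \<eta>_def])
        also have "\<dots> \<le> C\<^sup>2 * t ^ (2 * (r + \<beta>)) * real N * \<delta>\<^sup>2"
          using K1C by (intro mult_right_mono) (auto simp: t_def)
        finally show ?thesis .
      next
        case False
        then have L: "real N < 2 * real M" by simp
        have hD: "\<forall>i<N. \<bar>(Dmat N ^^ r) u i\<bar> \<le> 2 ^ r * \<delta>"
          using Dmat_pow_bdry[of N 0 u \<delta> r] hu by auto
        have hw: "\<forall>i<N. \<bar>(D1mat N ^^ \<beta>) ((Dmat N ^^ r) u) i\<bar> \<le> 2 ^ (r + \<beta>) * \<delta>"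
          using D1_pow_bound[OF hD, of \<beta>] by (simp add: power_add algebra_simps)
        have "Pn\<^sup>2 \<le> K2 * t ^ (2 * (r + \<beta>)) * real N * \<delta>\<^sup>2"
          unfolding Pn_def e K2_def t_def by (rule large_case[OF N L s1 hw])
        also have "\<dots> \<le> C\<^sup>2 * t ^ (2 * (r + \<beta>)) * real N * \<delta>\<^sup>2"
          using K2C by (intro mult_right_mono) (auto simp: t_def)
        finally show ?thesis .
      qed
      also have "\<dots> = (C * t ^ (r + \<beta>) * sqrt (real N) * \<delta>)\<^sup>2"
        by (simp add: power_mult_distrib power_mult[symmetric] mult.commute)
      finally have "Pn\<^sup>2 \<le> (C * t ^ (r + \<beta>) * sqrt (real N) * \<delta>)\<^sup>2" .
      moreover have "C * t ^ (r + \<beta>) * sqrt (real N) * \<delta> \<ge> 0" using C0 d0 by (simp add: t_def)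
      ultimately have "Pn \<le> C * t ^ (r + \<beta>) * sqrt (real N) * \<delta>" by (rule power2_le_imp_le)
      then show "l2norm N (P_M N M ((D1mat N ^^ \<beta>) (\<lambda>j. xt j - x j)))
         \<le> C * (real M / real N) ^ (r + \<beta>) * sqrt (real N) * \<delta>" unfolding Pn_def t_def .
    qed
  qed
qed

end
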